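(* Let $S$ be a monoid and let $A\xrightarrow{f}B\xrightarrow{g}C$ be a Rees short exact sequence of right $S$-acts. Then $B_S$ is artinian (resp. noetherian, Rees artinian, Rees noetherian) if and only if both $A_S$ and $C_S$ are artinian (resp. noetherian, Rees artinian, Rees noetherian).
   Context: A sequence $A\xrightarrow{f}B\xrightarrow{g}C$ of $S$-act homomorphisms is a Rees short exact sequence if $f$ is injective, $g$ is surjective, and $\ker g=\mathcal K_{\mathrm{Im} f}$, where $\ker g=\{(b,b'):g(b)=g(b')\}$ and $\mathcal K_{\mathrm{Im}f}=(f(A)\times f(A))\cup\Delta_B$ with $\Delta_B=\{(b,b):b\in B\}$. A right $S$-act is artinian (noetherian) if its lattice of congruences satisfies the descending (ascending) chain condition; Rees artinian (Rees noetherian) if its subacts satisfy the descending (ascending) chain condition. *)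

theory Defs
  imports Main
begin

definition right_act :: "'a set \<Rightarrow> ('a \<Rightarrow> 's::monoid_mult \<Rightarrow> 'a) \<Rightarrow> bool" where
  "right_act X act \<longleftrightarrow>
     (\<forall>x\<in>X. \<forall>s. act x s \<in> X) \<and>
     (\<forall>x\<in>X. act x 1 = x) \<and>
     (\<forall>x\<in>X. \<forall>s t. act (act x s) t = act x (s * t))"

definition act_hom :: "'a set \<Rightarrow> ('a \<Rightarrow> 's::monoid_mult \<Rightarrow> 'a) \<Rightarrow> 'b set \<Rightarrow> ('b \<Rightarrow> 's \<Rightarrow> 'b) \<Rightarrow> ('a \<Rightarrow> 'b) \<Rightarrow> bool" where
  "act_hom X actX Y actY h \<longleftrightarrow>
     (\<forall>x\<in>X. h x \<in> Y) \<and> (\<forall>x\<in>X. \<forall>s. h (actX x s) = actY (h x) s)"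

definition act_congruence :: "'a set \<Rightarrow> ('a \<Rightarrow> 's::monoid_mult \<Rightarrow> 'a) \<Rightarrow> ('a \<times> 'a) set \<Rightarrow> bool" where
  "act_congruence X act \<rho> \<longleftrightarrow>
     equiv X \<rho> \<and> (\<forall>(x, y)\<in>\<rho>. \<forall>s. (act x s, act y s) \<in> \<rho>)"

definition subact :: "'a set \<Rightarrow> ('a \<Rightarrow> 's::monoid_mult \<Rightarrow> 'a) \<Rightarrow> 'a set \<Rightarrow> bool" where
  "subact X act Y \<longleftrightarrow> Y \<subseteq> X \<and> (\<forall>y\<in>Y. \<forall>s. act y s \<in> Y)"

definition dcc_on :: "('x set \<Rightarrow> bool) \<Rightarrow> bool" where
  "dcc_on P \<longleftrightarrow> (\<forall>c::nat \<Rightarrow> 'x set. (\<forall>n. P (c n)) \<and> (\<forall>n. c (Suc n) \<subseteq> c n)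
       \<longrightarrow> (\<exists>N. \<forall>m\<ge>N. c m = c N))"

definition acc_on :: "('x set \<Rightarrow> bool) \<Rightarrow> bool" where
  "acc_on P \<longleftrightarrow> (\<forall>c::nat \<Rightarrow> 'x set. (\<forall>n. P (c n)) \<and> (\<forall>n. c n \<subseteq> c (Suc n))
       \<longrightarrow> (\<exists>N. \<forall>m\<ge>N. c m = c N))"

definition act_artinian :: "'a set \<Rightarrow> ('a \<Rightarrow> 's::monoid_mult \<Rightarrow> 'a) \<Rightarrow> bool" where
  "act_artinian X act \<longleftrightarrow> dcc_on (act_congruence X act)"

definition act_noetherian :: "'a set \<Rightarrow> ('a \<Rightarrow> 's::monoid_mult \<Rightarrow> 'a) \<Rightarrow> bool" where
  "act_noetherian X act \<longleftrightarrow> acc_on (act_congruence X act)"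

definition rees_artinian :: "'a set \<Rightarrow> ('a \<Rightarrow> 's::monoid_mult \<Rightarrow> 'a) \<Rightarrow> bool" where
  "rees_artinian X act \<longleftrightarrow> dcc_on (subact X act)"

definition rees_noetherian :: "'a set \<Rightarrow> ('a \<Rightarrow> 's::monoid_mult \<Rightarrow> 'a) \<Rightarrow> bool" where
  "rees_noetherian X act \<longleftrightarrow> acc_on (subact X act)"

definition rees_ses ::
  "'a set \<Rightarrow> ('a \<Rightarrow> 's::monoid_mult \<Rightarrow> 'a) \<Rightarrow> 'b set \<Rightarrow> ('b \<Rightarrow> 's \<Rightarrow> 'b) \<Rightarrow>
   'c set \<Rightarrow> ('c \<Rightarrow> 's \<Rightarrow> 'c) \<Rightarrow> ('a \<Rightarrow> 'b) \<Rightarrow> ('b \<Rightarrow> 'c) \<Rightarrow> bool" where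
  "rees_ses A actA B actB C actC f g \<longleftrightarrow>
     act_hom A actA B actB f \<and> act_hom B actB C actC g \<and>
     inj_on f A \<and> g ` B = C \<and>
     {(b, b'). b \<in> B \<and> b' \<in> B \<and> g b = g b'} = (f ` A \<times> f ` A) \<union> Id_on B"

end

theory Submission imports Defs begin

lemma dcc_embed:
  assumes "dcc_on Q" "\<And>x. P x \<Longrightarrow> Q (h x)"
    "\<And>x y. P x \<Longrightarrow> P y \<Longrightarrow> x \<subseteq> y \<Longrightarrow> h x \<subseteq> h y"
    "\<And>x y. P x \<Longrightarrow> P y \<Longrightarrow> h x = h y \<Longrightarrow> x = y"
  shows "dcc_on P"
  unfolding dcc_on_def
proof (intro allI impI)
  fix c :: "nat \<Rightarrow> _" assume "(\<forall>n. P (c n)) \<and> (\<forall>n. c (Suc n) \<subseteq> c n)"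
  then have Pc: "\<And>n. P (c n)" and dec: "\<And>n. c (Suc n) \<subseteq> c n" by auto
  have "(\<forall>n. Q (h (c n))) \<and> (\<forall>n. h (c (Suc n)) \<subseteq> h (c n))" using assms Pc dec by auto
  then obtain N where "\<forall>m\<ge>N. h (c m) = h (c N)"
    using assms(1)[unfolded dcc_on_def, rule_format, of "\<lambda>n. h (c n)"] by blast
  then show "\<exists>N. \<forall>m\<ge>N. c m = c N" using assms(4) Pc by blast
qed

lemma acc_embed:
  assumes "acc_on Q" "\<And>x. P x \<Longrightarrow> Q (h x)"
    "\<And>x y. P x \<Longrightarrow> P y \<Longrightarrow> x \<subseteq> y \<Longrightarrow> h x \<subseteq> h y"
    "\<And>x y. P x \<Longrightarrow> P y \<Longrightarrow> h x = h y \<Longrightarrow> x = y"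
  shows "acc_on P"
  unfolding acc_on_def
proof (intro allI impI)
  fix c :: "nat \<Rightarrow> _" assume "(\<forall>n. P (c n)) \<and> (\<forall>n. c n \<subseteq> c (Suc n))"
  then have Pc: "\<And>n. P (c n)" and dec: "\<And>n. c n \<subseteq> c (Suc n)" by auto
  have "(\<forall>n. Q (h (c n))) \<and> (\<forall>n. h (c n) \<subseteq> h (c (Suc n)))" using assms Pc dec by auto
  then obtain N where "\<forall>m\<ge>N. h (c m) = h (c N)"
    using assms(1)[unfolded acc_on_def, rule_format, of "\<lambda>n. h (c n)"] by blast
  then show "\<exists>N. \<forall>m\<ge>N. c m = c N" using assms(4) Pc by blast
qed

lemma dcc_combine:
  assumes "dcc_on Q1" "dcc_on Q2" "\<And>x. P x \<Longrightarrow> Q1 (h1 x)" "\<And>x. P x \<Longrightarrow> Q2 (h2 x)"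
    "\<And>x y. P x \<Longrightarrow> P y \<Longrightarrow> x \<subseteq> y \<Longrightarrow> h1 x \<subseteq> h1 y"
    "\<And>x y. P x \<Longrightarrow> P y \<Longrightarrow> x \<subseteq> y \<Longrightarrow> h2 x \<subseteq> h2 y"
    "\<And>x y. P x \<Longrightarrow> P y \<Longrightarrow> x \<subseteq> y \<Longrightarrow> h1 x = h1 y \<Longrightarrow> h2 x = h2 y \<Longrightarrow> x = y"
  shows "dcc_on P"
  unfolding dcc_on_def
proof (intro allI impI)
  fix c :: "nat \<Rightarrow> _" assume "(\<forall>n. P (c n)) \<and> (\<forall>n. c (Suc n) \<subseteq> c n)"
  then have Pc: "\<And>n. P (c n)" and dec: "\<And>n. c (Suc n) \<subseteq> c n" by auto
  have "(\<forall>n. Q1 (h1 (c n))) \<and> (\<forall>n. h1 (c (Suc n)) \<subseteq> h1 (c n))" using assms Pc dec by auto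
  then obtain N1 where N1: "\<forall>m\<ge>N1. h1 (c m) = h1 (c N1)"
    using assms(1)[unfolded dcc_on_def, rule_format, of "\<lambda>n. h1 (c n)"] by blast
  have "(\<forall>n. Q2 (h2 (c n))) \<and> (\<forall>n. h2 (c (Suc n)) \<subseteq> h2 (c n))" using assms Pc dec by auto
  then obtain N2 where N2: "\<forall>m\<ge>N2. h2 (c m) = h2 (c N2)"
    using assms(2)[unfolded dcc_on_def, rule_format, of "\<lambda>n. h2 (c n)"] by blast
  show "\<exists>N. \<forall>m\<ge>N. c m = c N"
  proof (intro exI allI impI)
    fix m assume m: "max N1 N2 \<le> m"
    have "c m \<subseteq> c (max N1 N2)" using lift_Suc_antimono_le[of c, OF dec m] .
    moreover have "h1 (c m) = h1 (c (max N1 N2))" using N1 m by (metis max.bounded_iff order_refl max.cobounded1)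
    moreover have "h2 (c m) = h2 (c (max N1 N2))" using N2 m by (metis max.bounded_iff order_refl max.cobounded2)
    ultimately show "c m = c (max N1 N2)" using assms(7) Pc by blast
  qed
qed

lemma acc_combine:
  assumes "acc_on Q1" "acc_on Q2" "\<And>x. P x \<Longrightarrow> Q1 (h1 x)" "\<And>x. P x \<Longrightarrow> Q2 (h2 x)"
    "\<And>x y. P x \<Longrightarrow> P y \<Longrightarrow> x \<subseteq> y \<Longrightarrow> h1 x \<subseteq> h1 y"
    "\<And>x y. P x \<Longrightarrow> P y \<Longrightarrow> x \<subseteq> y \<Longrightarrow> h2 x \<subseteq> h2 y"
    "\<And>x y. P x \<Longrightarrow> P y \<Longrightarrow> x \<subseteq> y \<Longrightarrow> h1 x = h1 y \<Longrightarrow> h2 x = h2 y \<Longrightarrow> x = y"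
  shows "acc_on P"
  unfolding acc_on_def
proof (intro allI impI)
  fix c :: "nat \<Rightarrow> _" assume "(\<forall>n. P (c n)) \<and> (\<forall>n. c n \<subseteq> c (Suc n))"
  then have Pc: "\<And>n. P (c n)" and dec: "\<And>n. c n \<subseteq> c (Suc n)" by auto
  have "(\<forall>n. Q1 (h1 (c n))) \<and> (\<forall>n. h1 (c n) \<subseteq> h1 (c (Suc n)))" using assms Pc dec by auto
  then obtain N1 where N1: "\<forall>m\<ge>N1. h1 (c m) = h1 (c N1)"
    using assms(1)[unfolded acc_on_def, rule_format, of "\<lambda>n. h1 (c n)"] by blast
  have "(\<forall>n. Q2 (h2 (c n))) \<and> (\<forall>n. h2 (c n) \<subseteq> h2 (c (Suc n)))" using assms Pc dec by auto
  then obtain N2 where N2: "\<forall>m\<ge>N2. h2 (c m) = h2 (c N2)"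
    using assms(2)[unfolded acc_on_def, rule_format, of "\<lambda>n. h2 (c n)"] by blast
  show "\<exists>N. \<forall>m\<ge>N. c m = c N"
  proof (intro exI allI impI)
    fix m assume m: "max N1 N2 \<le> m"
    have "c (max N1 N2) \<subseteq> c m" using lift_Suc_mono_le[of c, OF dec m] .
    moreover have "h1 (c (max N1 N2)) = h1 (c m)" using N1 m by (metis max.bounded_iff order_refl max.cobounded1)
    moreover have "h2 (c (max N1 N2)) = h2 (c m)" using N2 m by (metis max.bounded_iff order_refl max.cobounded2)
    ultimately show "c m = c (max N1 N2)" using assms(7) Pc by metis
  qed
qed


lemma cong_iff:
  "act_congruence X act \<rho> \<longleftrightarrow> \<rho> \<subseteq> X \<times> X \<and> (\<forall>x\<in>X. (x, x) \<in> \<rho>) \<and>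
     (\<forall>x y. (x, y) \<in> \<rho> \<longrightarrow> (y, x) \<in> \<rho>) \<and>
     (\<forall>x y z. (x, y) \<in> \<rho> \<longrightarrow> (y, z) \<in> \<rho> \<longrightarrow> (x, z) \<in> \<rho>) \<and>
     (\<forall>x y s. (x, y) \<in> \<rho> \<longrightarrow> (act x s, act y s) \<in> \<rho>)"
  unfolding act_congruence_def equiv_def refl_on_def sym_def trans_def by blast

locale ses =
  fixes A :: "'a set" and actA :: "'a \<Rightarrow> 's::monoid_mult \<Rightarrow> 'a"
    and B :: "'b set" and actB :: "'b \<Rightarrow> 's \<Rightarrow> 'b"
    and C :: "'c set" and actC :: "'c \<Rightarrow> 's \<Rightarrow> 'c"
    and f :: "'a \<Rightarrow> 'b" and g :: "'b \<Rightarrow> 'c"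
  assumes rA: "right_act A actA" and rB: "right_act B actB"
    and ses: "rees_ses A actA B actB C actC f g"
begin

lemma clA: "a \<in> A \<Longrightarrow> actA a s \<in> A" using rA unfolding right_act_def by blast
lemma clB: "b \<in> B \<Longrightarrow> actB b s \<in> B" using rB unfolding right_act_def by blast
lemma fB: "a \<in> A \<Longrightarrow> f a \<in> B" using ses unfolding rees_ses_def act_hom_def by blast
lemma fh: "a \<in> A \<Longrightarrow> f (actA a s) = actB (f a) s" using ses unfolding rees_ses_def act_hom_def by blast
lemma gh: "b \<in> B \<Longrightarrow> g (actB b s) = actC (g b) s" using ses unfolding rees_ses_def act_hom_def by blast
lemma finj: "inj_on f A" using ses unfolding rees_ses_def by blast
lemma gsurj: "g ` B = C" using ses unfolding rees_ses_def by blast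
lemma kerD: "b \<in> B \<Longrightarrow> b' \<in> B \<Longrightarrow> g b = g b' \<Longrightarrow> b = b' \<or> (b \<in> f ` A \<and> b' \<in> f ` A)"
proof -
  assume "b \<in> B" "b' \<in> B" "g b = g b'"
  then have "(b, b') \<in> {(b, b'). b \<in> B \<and> b' \<in> B \<and> g b = g b'}" by simp
  then have "(b, b') \<in> (f ` A \<times> f ` A) \<union> Id_on B" using ses unfolding rees_ses_def by simp
  then show ?thesis by auto
qed

lemma sub_hA: "subact B actB X \<Longrightarrow> subact A actA {a\<in>A. f a \<in> X}"
  unfolding subact_def using clA fh by auto
lemma sub_hC: "subact B actB X \<Longrightarrow> subact C actC (g ` X)"
  unfolding subact_def using gsurj gh by (auto, metis image_eqI subsetD)
lemma sub_key: "subact B actB X \<Longrightarrow> subact B actB Y \<Longrightarrow> X \<subseteq> Y \<Longrightarrow>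
   {a\<in>A. f a \<in> X} = {a\<in>A. f a \<in> Y} \<Longrightarrow> g ` X = g ` Y \<Longrightarrow> X = Y"
proof -
  assume sX: "subact B actB X" and sY: "subact B actB Y" and XY: "X \<subseteq> Y"
    and h1: "{a\<in>A. f a \<in> X} = {a\<in>A. f a \<in> Y}" and h2: "g ` X = g ` Y"
  have "y \<in> X" if y: "y \<in> Y" for y
  proof -
    obtain x where x: "x \<in> X" "g x = g y" using h2 y by (metis imageE imageI)
    have "x \<in> B" "y \<in> B" using x y sX sY unfolding subact_def by auto
    then have "x = y \<or> (x \<in> f ` A \<and> y \<in> f ` A)" using kerD x by blast
    then show ?thesis
    proof
      assume "x \<in> f ` A \<and> y \<in> f ` A"
      then obtain a where "a \<in> A" "y = f a" by auto
      then show ?thesis using h1 y by blast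
    qed (use x in simp)
  qed
  then show "X = Y" using XY by blast
qed
lemma sub_kA: "subact A actA Y \<Longrightarrow> subact B actB (f ` Y)"
  unfolding subact_def using fB fh by (auto, metis image_eqI subsetD)
lemma sub_kA_inj: "subact A actA Y \<Longrightarrow> subact A actA Y' \<Longrightarrow> f ` Y = f ` Y' \<Longrightarrow> Y = Y'"
  unfolding subact_def using finj inj_on_image_eq_iff by metis
lemma sub_kC: "subact C actC D \<Longrightarrow> subact B actB {b\<in>B. g b \<in> D}"
  unfolding subact_def using clB gh by auto
lemma sub_kC_inj: "subact C actC D \<Longrightarrow> subact C actC D' \<Longrightarrow> {b\<in>B. g b \<in> D} = {b\<in>B. g b \<in> D'} \<Longrightarrow> D = D'"
  unfolding subact_def using gsurj by (smt (verit, ccfv_SIG) imageE mem_Collect_eq subsetD subset_antisym subsetI)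

lemma rees_art: "rees_artinian B actB \<longleftrightarrow> rees_artinian A actA \<and> rees_artinian C actC"
  unfolding rees_artinian_def
proof (intro iffI conjI)
  assume d: "dcc_on (subact B actB)"
  show "dcc_on (subact A actA)"
    by (rule dcc_embed[OF d, of _ "\<lambda>Y. f ` Y"]) (auto simp: sub_kA sub_kA_inj)
  show "dcc_on (subact C actC)"
    by (rule dcc_embed[OF d, of _ "\<lambda>D. {b\<in>B. g b \<in> D}"]) (auto simp: sub_kC sub_kC_inj)
next
  assume "dcc_on (subact A actA) \<and> dcc_on (subact C actC)"
  then show "dcc_on (subact B actB)"
    by (intro dcc_combine[of "subact A actA" "subact C actC" _ "\<lambda>X. {a\<in>A. f a \<in> X}" "\<lambda>X. g ` X"])
      (auto simp: sub_hA sub_hC sub_key)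
qed

lemma rees_noe: "rees_noetherian B actB \<longleftrightarrow> rees_noetherian A actA \<and> rees_noetherian C actC"
  unfolding rees_noetherian_def
proof (intro iffI conjI)
  assume d: "acc_on (subact B actB)"
  show "acc_on (subact A actA)"
    by (rule acc_embed[OF d, of _ "\<lambda>Y. f ` Y"]) (auto simp: sub_kA sub_kA_inj)
  show "acc_on (subact C actC)"
    by (rule acc_embed[OF d, of _ "\<lambda>D. {b\<in>B. g b \<in> D}"]) (auto simp: sub_kC sub_kC_inj)
next
  assume "acc_on (subact A actA) \<and> acc_on (subact C actC)"
  then show "acc_on (subact B actB)"
    by (intro acc_combine[of "subact A actA" "subact C actC" _ "\<lambda>X. {a\<in>A. f a \<in> X}" "\<lambda>X. g ` X"])
      (auto simp: sub_hA sub_hC sub_key)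
qed


definition "cA \<rho> = {(a, a'). a \<in> A \<and> a' \<in> A \<and> (f a, f a') \<in> \<rho>}"
definition "TT \<rho> = {x. \<exists>a\<in>A. (x, f a) \<in> \<rho>}"
definition "RR \<rho> = \<rho> \<union> TT \<rho> \<times> TT \<rho>"
definition "cC \<rho> = (\<lambda>(x, y). (g x, g y)) ` RR \<rho>"
definition "kA \<sigma> = (\<lambda>(x, y). (f x, f y)) ` \<sigma> \<union> Id_on B"
definition "kC \<sigma> = {(x, y). x \<in> B \<and> y \<in> B \<and> (g x, g y) \<in> \<sigma>}"

lemma cD: assumes "act_congruence X act \<rho>"
  shows cD_sub: "(x, y) \<in> \<rho> \<Longrightarrow> x \<in> X \<and> y \<in> X"
    and cD_refl: "x \<in> X \<Longrightarrow> (x, x) \<in> \<rho>"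
    and cD_sym: "(x, y) \<in> \<rho> \<Longrightarrow> (y, x) \<in> \<rho>"
    and cD_trans: "(x, y) \<in> \<rho> \<Longrightarrow> (y, z) \<in> \<rho> \<Longrightarrow> (x, z) \<in> \<rho>"
    and cD_comp: "(x, y) \<in> \<rho> \<Longrightarrow> (act x s, act y s) \<in> \<rho>"
  using assms unfolding cong_iff by blast+
lemma cI: assumes "\<And>x y. (x, y) \<in> \<rho> \<Longrightarrow> x \<in> X \<and> y \<in> X"
    "\<And>x. x \<in> X \<Longrightarrow> (x, x) \<in> \<rho>"
    "\<And>x y. (x, y) \<in> \<rho> \<Longrightarrow> (y, x) \<in> \<rho>"
    "\<And>x y z. (x, y) \<in> \<rho> \<Longrightarrow> (y, z) \<in> \<rho> \<Longrightarrow> (x, z) \<in> \<rho>"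
    "\<And>x y s. (x, y) \<in> \<rho> \<Longrightarrow> (act x s, act y s) \<in> \<rho>"
  shows "act_congruence X act \<rho>"
proof -
  have "\<rho> \<subseteq> X \<times> X" using assms(1) by auto
  then show ?thesis unfolding cong_iff using assms(2-5) by blast
qed
lemma con_cA: "act_congruence B actB \<rho> \<Longrightarrow> act_congruence A actA (cA \<rho>)"
proof -
  assume c: "act_congruence B actB \<rho>"
  show ?thesis
  proof (rule cI)
    show "\<And>x y. (x, y) \<in> cA \<rho> \<Longrightarrow> x \<in> A \<and> y \<in> A" unfolding cA_def by auto
    show "\<And>x. x \<in> A \<Longrightarrow> (x, x) \<in> cA \<rho>" using cD_refl[OF c] fB unfolding cA_def by auto
    show "\<And>x y. (x, y) \<in> cA \<rho> \<Longrightarrow> (y, x) \<in> cA \<rho>" using cD_sym[OF c] unfolding cA_def by auto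
    show "\<And>x y z. (x, y) \<in> cA \<rho> \<Longrightarrow> (y, z) \<in> cA \<rho> \<Longrightarrow> (x, z) \<in> cA \<rho>"
      unfolding cA_def using cD_trans[OF c] by auto
  next
    fix x y s assume "(x, y) \<in> cA \<rho>"
    then have "x \<in> A" "y \<in> A" "(f x, f y) \<in> \<rho>" unfolding cA_def by auto
    then show "(actA x s, actA y s) \<in> cA \<rho>" using cD_comp[OF c] fh clA unfolding cA_def by simp
  qed
qed

lemma TT_B: assumes c: "act_congruence B actB \<rho>" shows "x \<in> TT \<rho> \<Longrightarrow> x \<in> B"
proof -
  assume "x \<in> TT \<rho>"
  then obtain a where "(x, f a) \<in> \<rho>" unfolding TT_def by blast
  then show "x \<in> B" using cD_sub[OF c] by simp
qed

lemma TT_closed: assumes c: "act_congruence B actB \<rho>"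
  shows "(x, y) \<in> \<rho> \<Longrightarrow> y \<in> TT \<rho> \<Longrightarrow> x \<in> TT \<rho>"
proof -
  assume xy: "(x, y) \<in> \<rho>" and "y \<in> TT \<rho>"
  then obtain a where a: "a \<in> A" "(y, f a) \<in> \<rho>" unfolding TT_def by blast
  have "(x, f a) \<in> \<rho>" using cD_trans[OF c xy a(2)] .
  then show "x \<in> TT \<rho>" using a(1) unfolding TT_def by blast
qed

lemma RR_sub: assumes c: "act_congruence B actB \<rho>"
  shows "(x, y) \<in> RR \<rho> \<Longrightarrow> x \<in> B \<and> y \<in> B"
proof -
  assume "(x, y) \<in> RR \<rho>"
  then have "(x, y) \<in> \<rho> \<or> (x \<in> TT \<rho> \<and> y \<in> TT \<rho>)" unfolding RR_def by blast
  then show ?thesis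
  proof
    assume "(x, y) \<in> \<rho>" then show ?thesis using cD_sub[OF c] by simp
  next
    assume "x \<in> TT \<rho> \<and> y \<in> TT \<rho>" then show ?thesis using TT_B[OF c] by simp
  qed
qed

lemma RR_sym: assumes c: "act_congruence B actB \<rho>"
  shows "(x, y) \<in> RR \<rho> \<Longrightarrow> (y, x) \<in> RR \<rho>"
proof -
  assume "(x, y) \<in> RR \<rho>"
  then have "(x, y) \<in> \<rho> \<or> (x \<in> TT \<rho> \<and> y \<in> TT \<rho>)" unfolding RR_def by blast
  then show ?thesis
  proof
    assume "(x, y) \<in> \<rho>" then have "(y, x) \<in> \<rho>" using cD_sym[OF c] by simp
    then show ?thesis unfolding RR_def by simp
  next
    assume "x \<in> TT \<rho> \<and> y \<in> TT \<rho>" then show ?thesis unfolding RR_def by simp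
  qed
qed

lemma RR_trans: assumes c: "act_congruence B actB \<rho>"
  shows "(x, y) \<in> RR \<rho> \<Longrightarrow> (y, z) \<in> RR \<rho> \<Longrightarrow> (x, z) \<in> RR \<rho>"
proof -
  assume xy: "(x, y) \<in> RR \<rho>" and yz: "(y, z) \<in> RR \<rho>"
  have S: "(z, y) \<in> \<rho>" if "(y, z) \<in> \<rho>" using cD_sym[OF c that] .
  show ?thesis
  proof (cases "(x, y) \<in> \<rho>")
    case True
    show ?thesis
    proof (cases "(y, z) \<in> \<rho>")
      case True2: True
      then show ?thesis using cD_trans[OF c True True2] unfolding RR_def by blast
    next
      case False
      then have "y \<in> TT \<rho>" "z \<in> TT \<rho>" using yz unfolding RR_def by auto
      then show ?thesis using TT_closed[OF c True] unfolding RR_def by blast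
    qed
  next
    case False
    then have T: "x \<in> TT \<rho>" "y \<in> TT \<rho>" using xy unfolding RR_def by auto
    show ?thesis
    proof (cases "(y, z) \<in> \<rho>")
      case True2: True
      then show ?thesis using TT_closed[OF c S[OF True2]] T unfolding RR_def by blast
    next
      case False
      then have "y \<in> TT \<rho>" "z \<in> TT \<rho>" using yz unfolding RR_def by auto
      then show ?thesis using T unfolding RR_def by blast
    qed
  qed
qed

lemma TT_comp: assumes c: "act_congruence B actB \<rho>" shows "x \<in> TT \<rho> \<Longrightarrow> actB x s \<in> TT \<rho>"
proof -
  assume "x \<in> TT \<rho>"
  then obtain a where a: "a \<in> A" "(x, f a) \<in> \<rho>" unfolding TT_def by blast
  then have "(actB x s, f (actA a s)) \<in> \<rho>" using cD_comp[OF c] fh by simp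
  then show ?thesis using clA a unfolding TT_def by blast
qed

lemma RR_comp: assumes c: "act_congruence B actB \<rho>"
  shows "(x, y) \<in> RR \<rho> \<Longrightarrow> (actB x s, actB y s) \<in> RR \<rho>"
proof -
  assume "(x, y) \<in> RR \<rho>"
  then have "(x, y) \<in> \<rho> \<or> (x \<in> TT \<rho> \<and> y \<in> TT \<rho>)" unfolding RR_def by blast
  then show ?thesis
  proof
    assume "(x, y) \<in> \<rho>" then have "(actB x s, actB y s) \<in> \<rho>" using cD_comp[OF c] by simp
    then show ?thesis unfolding RR_def by simp
  next
    assume "x \<in> TT \<rho> \<and> y \<in> TT \<rho>" then show ?thesis using TT_comp[OF c] unfolding RR_def by simp
  qed
qed

lemma RR_ker: assumes c: "act_congruence B actB \<rho>"
  shows "x \<in> B \<Longrightarrow> y \<in> B \<Longrightarrow> g x = g y \<Longrightarrow> (x, y) \<in> RR \<rho>"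
proof -
  assume xy: "x \<in> B" "y \<in> B" "g x = g y"
  then have "x = y \<or> (x \<in> f ` A \<and> y \<in> f ` A)" using kerD by blast
  then show "(x, y) \<in> RR \<rho>"
  proof
    assume "x \<in> f ` A \<and> y \<in> f ` A"
    then have "x \<in> TT \<rho>" "y \<in> TT \<rho>" using cD_refl[OF c] fB unfolding TT_def by auto
    then show ?thesis unfolding RR_def by blast
  next
    assume "x = y" then show ?thesis using cD_refl[OF c] xy unfolding RR_def by blast
  qed
qed

lemma RR_pull:
  assumes c: "act_congruence B actB \<rho>" and x: "x \<in> B" "y \<in> B" and xy: "(g x, g y) \<in> cC \<rho>"
  shows "(x, y) \<in> RR \<rho>"
proof -
  obtain u v where uv: "(u, v) \<in> RR \<rho>" "g x = g u" "g y = g v" using xy unfolding cC_def by auto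
  have "u \<in> B" "v \<in> B" using RR_sub[OF c uv(1)] by auto
  then have "(x, u) \<in> RR \<rho>" "(v, y) \<in> RR \<rho>" using RR_ker[OF c] x uv by auto
  then show ?thesis using RR_trans[OF c] uv(1) by blast
qed

lemma con_cC: assumes c: "act_congruence B actB \<rho>" shows "act_congruence C actC (cC \<rho>)"
proof (rule cI)
  fix x y assume "(x, y) \<in> cC \<rho>"
  then obtain u v where uv: "(u, v) \<in> RR \<rho>" "x = g u" "y = g v" unfolding cC_def by auto
  then show "x \<in> C \<and> y \<in> C" using RR_sub[OF c uv(1)] gsurj by auto
next
  fix x assume "x \<in> C"
  then obtain b where b: "b \<in> B" "x = g b" using gsurj by auto
  then have "(b, b) \<in> RR \<rho>" using RR_ker[OF c] by simp
  then show "(x, x) \<in> cC \<rho>" using b unfolding cC_def by force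
next
  fix x y assume "(x, y) \<in> cC \<rho>"
  then obtain u v where uv: "(u, v) \<in> RR \<rho>" "x = g u" "y = g v" unfolding cC_def by auto
  then have "(v, u) \<in> RR \<rho>" using RR_sym[OF c] by simp
  then show "(y, x) \<in> cC \<rho>" using uv unfolding cC_def by force
next
  fix x y z assume xy: "(x, y) \<in> cC \<rho>" and yz: "(y, z) \<in> cC \<rho>"
  obtain u v where uv: "(u, v) \<in> RR \<rho>" "x = g u" "y = g v" using xy unfolding cC_def by auto
  obtain v' w where vw: "(v', w) \<in> RR \<rho>" "y = g v'" "z = g w" using yz unfolding cC_def by auto
  have "v \<in> B" "v' \<in> B" using RR_sub[OF c uv(1)] RR_sub[OF c vw(1)] by auto
  then have "(v, v') \<in> RR \<rho>" using RR_ker[OF c] uv vw by simp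
  then have "(u, w) \<in> RR \<rho>" using RR_trans[OF c] uv(1) vw(1) by blast
  then show "(x, z) \<in> cC \<rho>" using uv vw unfolding cC_def by force
next
  fix x y s assume "(x, y) \<in> cC \<rho>"
  then obtain u v where uv: "(u, v) \<in> RR \<rho>" "x = g u" "y = g v" unfolding cC_def by auto
  have "u \<in> B" "v \<in> B" using RR_sub[OF c uv(1)] by auto
  then have "actC x s = g (actB u s)" "actC y s = g (actB v s)" using gh uv by auto
  moreover have "(actB u s, actB v s) \<in> RR \<rho>" using RR_comp[OF c uv(1)] .
  ultimately show "(actC x s, actC y s) \<in> cC \<rho>" unfolding cC_def by force
qed

lemma con_key:
  assumes c1: "act_congruence B actB \<rho>" and c2: "act_congruence B actB \<rho>'" and sub: "\<rho> \<subseteq> \<rho>'"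
    and h1: "cA \<rho> = cA \<rho>'" and h2: "cC \<rho> = cC \<rho>'"
  shows "\<rho> = \<rho>'"
proof -
  have "(b, c) \<in> \<rho>" if bc: "(b, c) \<in> \<rho>'" for b c
  proof -
    have B: "b \<in> B" "c \<in> B" using cD_sub[OF c2 bc] by auto
    have "(b, c) \<in> RR \<rho>'" using bc unfolding RR_def by blast
    then have "(g b, g c) \<in> cC \<rho>'" unfolding cC_def by force
    then have R: "(b, c) \<in> RR \<rho>" using RR_pull[OF c1 B] h2 by simp
    show ?thesis
    proof (cases "(b, c) \<in> \<rho>")
      case False
      with R have "b \<in> TT \<rho>" "c \<in> TT \<rho>" unfolding RR_def by auto
      then obtain a1 a2 where a: "a1 \<in> A" "a2 \<in> A" "(b, f a1) \<in> \<rho>" "(c, f a2) \<in> \<rho>"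
        unfolding TT_def by blast
      have "(f a1, b) \<in> \<rho>'" using cD_sym[OF c1 a(3)] sub by blast
      moreover have "(c, f a2) \<in> \<rho>'" using a(4) sub by blast
      ultimately have "(f a1, f a2) \<in> \<rho>'" using cD_trans[OF c2] bc by blast
      then have "(a1, a2) \<in> cA \<rho>'" using a unfolding cA_def by simp
      then have "(a1, a2) \<in> cA \<rho>" using h1 by simp
      then have fa: "(f a1, f a2) \<in> \<rho>" unfolding cA_def by simp
      have "(b, f a2) \<in> \<rho>" using cD_trans[OF c1 a(3) fa] .
      then show ?thesis using cD_trans[OF c1 _ cD_sym[OF c1 a(4)]] by blast
    qed
  qed
  then show ?thesis using sub by auto
qed

lemma con_kA: assumes c: "act_congruence A actA \<sigma>" shows "act_congruence B actB (kA \<sigma>)"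
proof (rule cI)
  fix x y assume "(x, y) \<in> kA \<sigma>"
  then have "(\<exists>a a'. (a, a') \<in> \<sigma> \<and> x = f a \<and> y = f a') \<or> (x = y \<and> x \<in> B)"
    unfolding kA_def by auto
  then show "x \<in> B \<and> y \<in> B" using cD_sub[OF c] fB by blast
next
  fix x assume "x \<in> B" then show "(x, x) \<in> kA \<sigma>" unfolding kA_def by auto
next
  fix x y assume "(x, y) \<in> kA \<sigma>"
  then have "(\<exists>a a'. (a, a') \<in> \<sigma> \<and> x = f a \<and> y = f a') \<or> (x = y \<and> x \<in> B)"
    unfolding kA_def by auto
  then show "(y, x) \<in> kA \<sigma>"
  proof
    assume "\<exists>a a'. (a, a') \<in> \<sigma> \<and> x = f a \<and> y = f a'"
    then obtain a a' where "(a, a') \<in> \<sigma>" "x = f a" "y = f a'" by blast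
    moreover have "(a', a) \<in> \<sigma>" using cD_sym[OF c] calculation(1) .
    ultimately show ?thesis unfolding kA_def by force
  qed (auto simp: kA_def)
next
  fix x y z assume xy: "(x, y) \<in> kA \<sigma>" and yz: "(y, z) \<in> kA \<sigma>"
  have d1: "(\<exists>a a'. (a, a') \<in> \<sigma> \<and> x = f a \<and> y = f a') \<or> x = y"
    using xy unfolding kA_def by auto
  have d2: "(\<exists>a a'. (a, a') \<in> \<sigma> \<and> y = f a \<and> z = f a') \<or> y = z"
    using yz unfolding kA_def by auto
  show "(x, z) \<in> kA \<sigma>"
  proof (cases "x = y")
    case True then show ?thesis using yz by simp
  next
    case False
    then obtain a a' where aa: "(a, a') \<in> \<sigma>" "x = f a" "y = f a'" using d1 by blast
    show ?thesis
    proof (cases "y = z")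
      case True then show ?thesis using xy by simp
    next
      case False
      then obtain b b' where bb: "(b, b') \<in> \<sigma>" "y = f b" "z = f b'" using d2 by blast
      have "a' \<in> A" "b \<in> A" using cD_sub[OF c aa(1)] cD_sub[OF c bb(1)] by auto
      then have "a' = b" using finj aa(3) bb(2) unfolding inj_on_def by auto
      then have "(a, b') \<in> \<sigma>" using cD_trans[OF c aa(1)] bb(1) by simp
      then show ?thesis using aa bb unfolding kA_def by force
    qed
  qed
next
  fix x y s assume "(x, y) \<in> kA \<sigma>"
  then have "(\<exists>a a'. (a, a') \<in> \<sigma> \<and> x = f a \<and> y = f a') \<or> (x = y \<and> x \<in> B)"
    unfolding kA_def by auto
  then show "(actB x s, actB y s) \<in> kA \<sigma>"
  proof
    assume "\<exists>a a'. (a, a') \<in> \<sigma> \<and> x = f a \<and> y = f a'"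
    then obtain a a' where aa: "(a, a') \<in> \<sigma>" "x = f a" "y = f a'" by blast
    have "a \<in> A" "a' \<in> A" using cD_sub[OF c aa(1)] by auto
    then have "actB x s = f (actA a s)" "actB y s = f (actA a' s)" using fh aa by auto
    moreover have "(actA a s, actA a' s) \<in> \<sigma>" using cD_comp[OF c aa(1)] .
    ultimately show ?thesis unfolding kA_def by force
  next
    assume "x = y \<and> x \<in> B" then show ?thesis using clB unfolding kA_def by auto
  qed
qed

lemma kA_sub: assumes c: "act_congruence A actA \<sigma>" and c': "act_congruence A actA \<sigma>'"
  and e: "kA \<sigma> \<subseteq> kA \<sigma>'" shows "\<sigma> \<subseteq> \<sigma>'"
proof
  fix p assume p: "p \<in> \<sigma>"
  obtain x y where xy: "p = (x, y)" by (cases p)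
  have A: "x \<in> A" "y \<in> A" using cD_sub[OF c] p xy by auto
  have "(f x, f y) \<in> kA \<sigma>'" using e p xy unfolding kA_def by force
  then have "(\<exists>a a'. (a, a') \<in> \<sigma>' \<and> f x = f a \<and> f y = f a') \<or> f x = f y"
    unfolding kA_def by auto
  then show "p \<in> \<sigma>'"
  proof
    assume "\<exists>a a'. (a, a') \<in> \<sigma>' \<and> f x = f a \<and> f y = f a'"
    then obtain a a' where aa: "(a, a') \<in> \<sigma>'" "f x = f a" "f y = f a'" by blast
    have "a \<in> A" "a' \<in> A" using cD_sub[OF c' aa(1)] by auto
    then have "x = a" "y = a'" using finj A aa unfolding inj_on_def by auto
    then show ?thesis using aa xy by simp
  next
    assume "f x = f y"
    then have "x = y" using finj A unfolding inj_on_def by auto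
    then show ?thesis using cD_refl[OF c'] A xy by simp
  qed
qed

lemma kA_mono: "\<sigma> \<subseteq> \<sigma>' \<Longrightarrow> kA \<sigma> \<subseteq> kA \<sigma>'" unfolding kA_def by auto

lemma con_kC: assumes c: "act_congruence C actC \<sigma>" shows "act_congruence B actB (kC \<sigma>)"
proof (rule cI)
  show "\<And>x y. (x, y) \<in> kC \<sigma> \<Longrightarrow> x \<in> B \<and> y \<in> B" unfolding kC_def by auto
  show "\<And>x. x \<in> B \<Longrightarrow> (x, x) \<in> kC \<sigma>" unfolding kC_def using cD_refl[OF c] gsurj by auto
  show "\<And>x y. (x, y) \<in> kC \<sigma> \<Longrightarrow> (y, x) \<in> kC \<sigma>" unfolding kC_def using cD_sym[OF c] by auto
  show "\<And>x y z. (x, y) \<in> kC \<sigma> \<Longrightarrow> (y, z) \<in> kC \<sigma> \<Longrightarrow> (x, z) \<in> kC \<sigma>"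
    unfolding kC_def using cD_trans[OF c] by auto
  show "\<And>x y s. (x, y) \<in> kC \<sigma> \<Longrightarrow> (actB x s, actB y s) \<in> kC \<sigma>"
    unfolding kC_def using cD_comp[OF c] gh clB by auto
qed

lemma kC_sub: assumes c: "act_congruence C actC \<sigma>"
  and e: "kC \<sigma> \<subseteq> kC \<sigma>'" shows "\<sigma> \<subseteq> \<sigma>'"
proof
  fix p assume p: "p \<in> \<sigma>"
  obtain x y where xy: "p = (x, y)" by (cases p)
  have "x \<in> C" "y \<in> C" using cD_sub[OF c] p xy by auto
  then obtain u v where "u \<in> B" "v \<in> B" "x = g u" "y = g v" using gsurj by blast
  then have "(u, v) \<in> kC \<sigma>" using p xy unfolding kC_def by simp
  then have "(u, v) \<in> kC \<sigma>'" using e by blast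
  then show "p \<in> \<sigma>'" unfolding kC_def using xy \<open>x = g u\<close> \<open>y = g v\<close> by simp
qed

lemma kC_mono: "\<sigma> \<subseteq> \<sigma>' \<Longrightarrow> kC \<sigma> \<subseteq> kC \<sigma>'" unfolding kC_def by auto

lemma cA_mono: "\<rho> \<subseteq> \<rho>' \<Longrightarrow> cA \<rho> \<subseteq> cA \<rho>'" unfolding cA_def by auto

lemma cC_mono: "\<rho> \<subseteq> \<rho>' \<Longrightarrow> cC \<rho> \<subseteq> cC \<rho>'"
proof -
  assume s: "\<rho> \<subseteq> \<rho>'"
  then have "TT \<rho> \<subseteq> TT \<rho>'" unfolding TT_def by blast
  then have "RR \<rho> \<subseteq> RR \<rho>'" using s unfolding RR_def by blast
  then show ?thesis unfolding cC_def by (rule image_mono)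
qed

lemma art: "act_artinian B actB \<longleftrightarrow> act_artinian A actA \<and> act_artinian C actC"
  unfolding act_artinian_def
proof (intro iffI conjI)
  assume d: "dcc_on (act_congruence B actB)"
  show "dcc_on (act_congruence A actA)"
    by (rule dcc_embed[OF d, of _ kA]) (simp_all add: con_kA kA_mono, metis kA_sub subset_antisym order_refl)
  show "dcc_on (act_congruence C actC)"
    by (rule dcc_embed[OF d, of _ kC]) (simp_all add: con_kC kC_mono, metis kC_sub subset_antisym order_refl)
next
  assume "dcc_on (act_congruence A actA) \<and> dcc_on (act_congruence C actC)"
  then show "dcc_on (act_congruence B actB)"
    by (intro dcc_combine[of "act_congruence A actA" "act_congruence C actC" _ cA cC])
      (simp_all add: con_cA con_cC con_key cA_mono cC_mono)
qed

lemma noe: "act_noetherian B actB \<longleftrightarrow> act_noetherian A actA \<and> act_noetherian C actC"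
  unfolding act_noetherian_def
proof (intro iffI conjI)
  assume d: "acc_on (act_congruence B actB)"
  show "acc_on (act_congruence A actA)"
    by (rule acc_embed[OF d, of _ kA]) (simp_all add: con_kA kA_mono, metis kA_sub subset_antisym order_refl)
  show "acc_on (act_congruence C actC)"
    by (rule acc_embed[OF d, of _ kC]) (simp_all add: con_kC kC_mono, metis kC_sub subset_antisym order_refl)
next
  assume "acc_on (act_congruence A actA) \<and> acc_on (act_congruence C actC)"
  then show "acc_on (act_congruence B actB)"
    by (intro acc_combine[of "act_congruence A actA" "act_congruence C actC" _ cA cC])
      (simp_all add: con_cA con_cC con_key cA_mono cC_mono)
qed

end

theorem mainTheorem5:
  fixes A :: "'a set" and actA :: "'a \<Rightarrow> 's::monoid_mult \<Rightarrow> 'a"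
    and B :: "'b set" and actB :: "'b \<Rightarrow> 's \<Rightarrow> 'b"
    and C :: "'c set" and actC :: "'c \<Rightarrow> 's \<Rightarrow> 'c"
    and f :: "'a \<Rightarrow> 'b" and g :: "'b \<Rightarrow> 'c"
  assumes "right_act A actA" and "right_act B actB" and "right_act C actC"
    and "rees_ses A actA B actB C actC f g"
  shows "(act_artinian B actB \<longleftrightarrow> act_artinian A actA \<and> act_artinian C actC) \<and>
         (act_noetherian B actB \<longleftrightarrow> act_noetherian A actA \<and> act_noetherian C actC) \<and>
         (rees_artinian B actB \<longleftrightarrow> rees_artinian A actA \<and> rees_artinian C actC) \<and>
         (rees_noetherian B actB \<longleftrightarrow> rees_noetherian A actA \<and> rees_noetherian C actC)"
proof -
  interpret ses A actA B actB C actC f g using assms by (unfold_locales; simp)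
  show ?thesis using art noe rees_art rees_noe by blast
qed

end
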